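(* For every integer $n\ge 13$, $$\lambda_{\min}\big(\mathcal U(n-5,3)^c\big)<\lambda_{\min}\big(\mathcal U'(n-4)^c\big).$$
   Context: All graphs are simple and finite. For a graph $G$, $\lambda_{\min}(G)$ denotes the least eigenvalue of the adjacency matrix $A(G)$, and $G^c$ denotes the complement of $G$. $K_{1,m}$ is the star with $m$ edges; its vertex of degree $m$ is the center and the others are pendant vertices. $S_m^3$ denotes the graph of order $m$ obtained from $K_{1,m-1}$ by adding one edge between two of its pendant vertices. For integers $p\ge 1$, $q\ge 3$, $\mathcal U(p,q)$ is the graph of order $p+q+2$ obtained from disjoint copies of $K_{1,p}$ and $S_{q+1}^3$ by adding one edge joining a pendant vertex of $K_{1,p}$ to a pendant (degree-one) vertex of $S_{q+1}^3$. For an integer $p\ge 1$, $\mathcal U'(p)$ is the graph of order $p+4$ obtained from disjoint copies of $K_{1,p}$ and the triangle $C_3$ by adding one edge joining a pendant vertex of $K_{1,p}$ to a vertex of $C_3$. *)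

theory Defs
  imports "Jordan_Normal_Form.Char_Poly"
begin

text \<open>A simple graph of order m has vertex set {0..<m}; it is given by an
  edge relation (assumed symmetric and irreflexive on {0..<m}).\<close>

definition adj_mat :: "nat \<Rightarrow> (nat \<Rightarrow> nat \<Rightarrow> bool) \<Rightarrow> real mat" where
  "adj_mat m E = mat m m (\<lambda>(i, j). if E i j then 1 else 0)"

definition compl_graph :: "(nat \<Rightarrow> nat \<Rightarrow> bool) \<Rightarrow> nat \<Rightarrow> nat \<Rightarrow> bool" where
  "compl_graph E i j = (i \<noteq> j \<and> \<not> E i j)"

definition lambda_min :: "real mat \<Rightarrow> real" where
  "lambda_min A = Min {k. eigenvalue A k}"

definition sym_edges :: "(nat \<times> nat) set \<Rightarrow> nat \<Rightarrow> nat \<Rightarrow> bool" where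
  "sym_edges S i j = ((i, j) \<in> S \<or> (j, i) \<in> S)"

text \<open>U(p,q), order p+q+2: star K_{1,p} with centre 0 and pendants 1..p;
  S^3_{q+1} with centre p+1, pendants p+2..p+q+1 and extra edge (p+q, p+q+1);
  joining edge between pendant 1 of the star and the degree-one vertex p+2.\<close>
definition U_graph :: "nat \<Rightarrow> nat \<Rightarrow> nat \<Rightarrow> nat \<Rightarrow> bool" where
  "U_graph p q = sym_edges
     ({(0, i) | i. 1 \<le> i \<and> i \<le> p} \<union> {(p + 1, j) | j. p + 2 \<le> j \<and> j \<le> p + q + 1}
      \<union> {(p + q, p + q + 1), (1, p + 2)})"

text \<open>U'(p), order p+4: star K_{1,p} with centre 0 and pendants 1..p;
  triangle on p+1, p+2, p+3; joining edge between pendant 1 and p+1.\<close>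
definition U'_graph :: "nat \<Rightarrow> nat \<Rightarrow> nat \<Rightarrow> bool" where
  "U'_graph p = sym_edges
     ({(0, i) | i. 1 \<le> i \<and> i \<le> p}
      \<union> {(p + 1, p + 2), (p + 2, p + 3), (p + 1, p + 3), (1, p + 1)})"

end

theory Submission
  imports Defs
begin


lemma adj_mat_carrier: "adj_mat n E \<in> carrier_mat n n"
  unfolding adj_mat_def by simp

lemma mult_adj:
  assumes "v \<in> carrier_vec n" "i < n"
  shows "(adj_mat n E *\<^sub>v v) $ i = (\<Sum>j \<in> {j. j < n \<and> E i j}. v $ j)"
proof -
  have "(adj_mat n E *\<^sub>v v) $ i = (\<Sum>j\<in>{0..<n}. (if E i j then 1 else 0) * v $ j)"
    using assms unfolding adj_mat_def by (simp add: scalar_prod_def)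
  also have "\<dots> = (\<Sum>j\<in>{0..<n}. if E i j then v $ j else 0)"
    by (intro sum.cong) auto
  also have "\<dots> = (\<Sum>j \<in> {j. j < n \<and> E i j}. v $ j)"
    by (subst sum.inter_filter[symmetric]) (auto intro: sum.cong)
  finally show ?thesis .
qed

lemma mult_compl:
  assumes "v \<in> carrier_vec n" "i < n"
  shows "(adj_mat n (compl_graph E) *\<^sub>v v) $ i
     = (\<Sum>j<n. v $ j) - (\<Sum>j \<in> {j. j < n \<and> (j = i \<or> E i j)}. v $ j)"
proof -
  have e: "{j. j < n \<and> compl_graph E i j} = {..<n} - {j. j < n \<and> (j = i \<or> E i j)}"
    unfolding compl_graph_def by auto
  have "(\<Sum>j \<in> {..<n} - {j. j < n \<and> (j = i \<or> E i j)}. v $ j)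
     = (\<Sum>j<n. v $ j) - (\<Sum>j \<in> {j. j < n \<and> (j = i \<or> E i j)}. v $ j)"
    by (rule sum_diff) auto
  then show ?thesis using mult_adj[OF assms, of "compl_graph E"] unfolding e by simp
qed

lemma finite_eig: "finite {k. eigenvalue (adj_mat n E) k}"
proof -
  have cp: "char_poly (adj_mat n E) \<noteq> 0"
    using degree_monic_char_poly[OF adj_mat_carrier, of n E] by auto
  have "{k. eigenvalue (adj_mat n E) k} = {k. poly (char_poly (adj_mat n E)) k = 0}"
    using eigenvalue_root_char_poly[OF adj_mat_carrier] by auto
  then show ?thesis using poly_roots_finite[OF cp] by simp
qed


lemma U'_eq: "U'_graph p i j = ((i = 0 \<and> 1 \<le> j \<and> j \<le> p) \<or> (j = 0 \<and> 1 \<le> i \<and> i \<le> p)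
   \<or> (i = p+1 \<and> j = p+2) \<or> (i = p+2 \<and> j = p+1) \<or> (i = p+2 \<and> j = p+3) \<or> (i = p+3 \<and> j = p+2)
   \<or> (i = p+1 \<and> j = p+3) \<or> (i = p+3 \<and> j = p+1) \<or> (i = 1 \<and> j = p+1) \<or> (i = p+1 \<and> j = 1))"
  unfolding U'_graph_def sym_edges_def by blast

lemma U'_N0: "p \<ge> 9 \<Longrightarrow> {j. j < p+4 \<and> compl_graph (U'_graph p) 0 j} = {p+1, p+2, p+3}"
  unfolding U'_eq compl_graph_def by auto
lemma U'_X1: "p \<ge> 9 \<Longrightarrow> {j. j < p+4 \<and> (j = 1 \<or> U'_graph p 1 j)} = {0, 1, p+1}"
  unfolding U'_eq by auto
lemma U'_XP: "p \<ge> 9 \<Longrightarrow> 2 \<le> i \<Longrightarrow> i \<le> p \<Longrightarrow> {j. j < p+4 \<and> (j = i \<or> U'_graph p i j)} = {0, i}"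
  unfolding U'_eq by auto
lemma U'_Xa: "p \<ge> 9 \<Longrightarrow> {j. j < p+4 \<and> (j = p+1 \<or> U'_graph p (p+1) j)} = {1, p+1, p+2, p+3}"
  unfolding U'_eq by auto
lemma U'_Xt1: "p \<ge> 9 \<Longrightarrow> {j. j < p+4 \<and> (j = p+2 \<or> U'_graph p (p+2) j)} = {p+1, p+2, p+3}"
  unfolding U'_eq by auto
lemma U'_Xt2: "p \<ge> 9 \<Longrightarrow> {j. j < p+4 \<and> (j = p+3 \<or> U'_graph p (p+3) j)} = {p+1, p+2, p+3}"
  unfolding U'_eq by auto


lemma sum_split_U':
  fixes p :: nat and f :: "nat \<Rightarrow> real"
  assumes "p \<ge> 9"
  shows "(\<Sum>j<p+4. f j) = f 0 + f 1 + (\<Sum>j\<in>{2..p}. f j) + f (p+1) + f (p+2) + (f (p+3) :: real)"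
proof -
  have e: "{..<p+4} = {0,1} \<union> ({2..p} \<union> {p+1,p+2,p+3})" using assms by auto
  have "(\<Sum>j<p+4. f j) = (\<Sum>j\<in>{0,1}. f j) + (\<Sum>j\<in>{2..p} \<union> {p+1,p+2,p+3}. f j)"
    unfolding e by (rule sum.union_disjoint) (use assms in auto)
  also have "(\<Sum>j\<in>{2..p} \<union> {p+1,p+2,p+3}. f j) = (\<Sum>j\<in>{2..p}. f j) + (\<Sum>j\<in>{p+1,p+2,p+3}. f j)"
    by (rule sum.union_disjoint) auto
  finally show ?thesis by simp
qed

lemma U'_rows:
  assumes p: "p \<ge> 9" and v: "v \<in> carrier_vec (p+4)"
  defines "A \<equiv> adj_mat (p+4) (compl_graph (U'_graph p))"
  defines "S \<equiv> (\<Sum>j<p+4. v $ j)"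
  shows "(A *\<^sub>v v) $ 0 = v$(p+1) + v$(p+2) + v$(p+3)"
    "(A *\<^sub>v v) $ 1 = S - v$0 - v$1 - v$(p+1)"
    "\<And>i. 2 \<le> i \<Longrightarrow> i \<le> p \<Longrightarrow> (A *\<^sub>v v) $ i = S - v$0 - v$i"
    "(A *\<^sub>v v) $ (p+1) = S - v$1 - v$(p+1) - v$(p+2) - v$(p+3)"
    "(A *\<^sub>v v) $ (p+2) = S - v$(p+1) - v$(p+2) - v$(p+3)"
    "(A *\<^sub>v v) $ (p+3) = S - v$(p+1) - v$(p+2) - v$(p+3)"
proof -
  show "(A *\<^sub>v v) $ 0 = v$(p+1) + v$(p+2) + v$(p+3)"
    unfolding A_def using mult_adj[OF v, of 0] U'_N0[OF p] by simp
  show "(A *\<^sub>v v) $ 1 = S - v$0 - v$1 - v$(p+1)"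
    unfolding A_def S_def using mult_compl[OF v, of 1] U'_X1[OF p] p by simp
  show "(A *\<^sub>v v) $ i = S - v$0 - v$i" if "2 \<le> i" "i \<le> p" for i
    unfolding A_def S_def using mult_compl[OF v, of i] U'_XP[OF p that] p that by simp
  show "(A *\<^sub>v v) $ (p+1) = S - v$1 - v$(p+1) - v$(p+2) - v$(p+3)"
    unfolding A_def S_def using mult_compl[OF v, of "p+1"] U'_Xa[OF p] p by simp
  show "(A *\<^sub>v v) $ (p+2) = S - v$(p+1) - v$(p+2) - v$(p+3)"
    unfolding A_def S_def using mult_compl[OF v, of "p+2"] U'_Xt1[OF p] p by simp
  show "(A *\<^sub>v v) $ (p+3) = S - v$(p+1) - v$(p+2) - v$(p+3)"
    unfolding A_def S_def using mult_compl[OF v, of "p+3"] U'_Xt2[OF p] p by simp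
qed


lemma U_eq: "U_graph q 3 i j = ((i = 0 \<and> 1 \<le> j \<and> j \<le> q) \<or> (j = 0 \<and> 1 \<le> i \<and> i \<le> q)
   \<or> (i = q+1 \<and> q+2 \<le> j \<and> j \<le> q+3+1) \<or> (j = q+1 \<and> q+2 \<le> i \<and> i \<le> q+3+1)
   \<or> (i = q+3 \<and> j = q+3+1) \<or> (i = q+3+1 \<and> j = q+3) \<or> (i = 1 \<and> j = q+2) \<or> (i = q+2 \<and> j = 1))"
  unfolding U_graph_def sym_edges_def by blast

lemma U_N0: "q \<ge> 8 \<Longrightarrow> {j. j < q+5 \<and> compl_graph (U_graph q 3) 0 j} = {q+1, q+2, q+3, q+4}"
  unfolding U_eq compl_graph_def by auto
lemma U_X1: "q \<ge> 8 \<Longrightarrow> {j. j < q+5 \<and> (j = 1 \<or> U_graph q 3 1 j)} = {0, 1, q+2}"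
  unfolding U_eq by auto
lemma U_XP: "q \<ge> 8 \<Longrightarrow> 2 \<le> i \<Longrightarrow> i \<le> q \<Longrightarrow> {j. j < q+5 \<and> (j = i \<or> U_graph q 3 i j)} = {0, i}"
  unfolding U_eq by auto
lemma U_Xc: "q \<ge> 8 \<Longrightarrow> {j. j < q+5 \<and> (j = q+1 \<or> U_graph q 3 (q+1) j)} = {q+1, q+2, q+3, q+4}"
  unfolding U_eq by auto
lemma U_Xa: "q \<ge> 8 \<Longrightarrow> {j. j < q+5 \<and> (j = q+2 \<or> U_graph q 3 (q+2) j)} = {1, q+1, q+2}"
  unfolding U_eq by auto
lemma U_Xb1: "q \<ge> 8 \<Longrightarrow> {j. j < q+5 \<and> (j = q+3 \<or> U_graph q 3 (q+3) j)} = {q+1, q+3, q+4}"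
  unfolding U_eq by auto
lemma U_Xb2: "q \<ge> 8 \<Longrightarrow> {j. j < q+5 \<and> (j = q+4 \<or> U_graph q 3 (q+4) j)} = {q+1, q+3, q+4}"
  unfolding U_eq by auto

lemma sum_split_U:
  fixes q :: nat and f :: "nat \<Rightarrow> real"
  assumes "q \<ge> 8"
  shows "(\<Sum>j<q+5. f j) = f 0 + f 1 + (\<Sum>j\<in>{2..q}. f j) + f (q+1) + f (q+2) + f (q+3) + f (q+4)"
proof -
  have e: "{..<q+5} = {0,1} \<union> ({2..q} \<union> {q+1,q+2,q+3,q+4})" using assms by auto
  have "(\<Sum>j<q+5. f j) = (\<Sum>j\<in>{0,1}. f j) + (\<Sum>j\<in>{2..q} \<union> {q+1,q+2,q+3,q+4}. f j)"
    unfolding e by (rule sum.union_disjoint) (use assms in auto)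
  also have "(\<Sum>j\<in>{2..q} \<union> {q+1,q+2,q+3,q+4}. f j) = (\<Sum>j\<in>{2..q}. f j) + (\<Sum>j\<in>{q+1,q+2,q+3,q+4}. f j)"
    by (rule sum.union_disjoint) auto
  finally show ?thesis by simp
qed

lemma U_rows:
  assumes q: "q \<ge> 8" and v: "v \<in> carrier_vec (q+5)"
  defines "A \<equiv> adj_mat (q+5) (compl_graph (U_graph q 3))"
  defines "S \<equiv> (\<Sum>j<q+5. v $ j)"
  shows "(A *\<^sub>v v) $ 0 = v$(q+1) + v$(q+2) + v$(q+3) + v$(q+4)"
    "(A *\<^sub>v v) $ 1 = S - v$0 - v$1 - v$(q+2)"
    "\<And>i. 2 \<le> i \<Longrightarrow> i \<le> q \<Longrightarrow> (A *\<^sub>v v) $ i = S - v$0 - v$i"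
    "(A *\<^sub>v v) $ (q+1) = S - v$(q+1) - v$(q+2) - v$(q+3) - v$(q+4)"
    "(A *\<^sub>v v) $ (q+2) = S - v$1 - v$(q+1) - v$(q+2)"
    "(A *\<^sub>v v) $ (q+3) = S - v$(q+1) - v$(q+3) - v$(q+4)"
    "(A *\<^sub>v v) $ (q+4) = S - v$(q+1) - v$(q+3) - v$(q+4)"
proof -
  show "(A *\<^sub>v v) $ 0 = v$(q+1) + v$(q+2) + v$(q+3) + v$(q+4)"
    unfolding A_def using mult_adj[OF v, of 0] U_N0[OF q] by simp
  show "(A *\<^sub>v v) $ 1 = S - v$0 - v$1 - v$(q+2)"
    unfolding A_def S_def using mult_compl[OF v, of 1] U_X1[OF q] q by simp
  show "(A *\<^sub>v v) $ i = S - v$0 - v$i" if "2 \<le> i" "i \<le> q" for i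
    unfolding A_def S_def using mult_compl[OF v, of i] U_XP[OF q that] q that by simp
  show "(A *\<^sub>v v) $ (q+1) = S - v$(q+1) - v$(q+2) - v$(q+3) - v$(q+4)"
    unfolding A_def S_def using mult_compl[OF v, of "q+1"] U_Xc[OF q] q by simp
  show "(A *\<^sub>v v) $ (q+2) = S - v$1 - v$(q+1) - v$(q+2)"
    unfolding A_def S_def using mult_compl[OF v, of "q+2"] U_Xa[OF q] q by simp
  show "(A *\<^sub>v v) $ (q+3) = S - v$(q+1) - v$(q+3) - v$(q+4)"
    unfolding A_def S_def using mult_compl[OF v, of "q+3"] U_Xb1[OF q] q by simp
  show "(A *\<^sub>v v) $ (q+4) = S - v$(q+1) - v$(q+3) - v$(q+4)"
    unfolding A_def S_def using mult_compl[OF v, of "q+4"] U_Xb2[OF q] q by simp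
qed


definition p1 :: "real \<Rightarrow> real \<Rightarrow> real" where
 "p1 k m = k^6 - m*k^5 + k^5 - 5*m*k^4 - 9*k^4 - m*k^3 - 13*k^3 + 11*m*k^2 + 3*k^2 + m*k + 7*k - 2*m"
definition p2 :: "real \<Rightarrow> real \<Rightarrow> real" where
 "p2 k m = k^5 - m*k^4 + k^4 - 4*m*k^3 - 5*k^3 + m*k^2 - 5*k^2 + 5*m*k + 2*k - 2*m + 2"

lemma c1: assumes "x \<ge> 13" shows "p1 (-x) (x-6) > 0"
proof -
  define r where "r = x - 13"
  have r: "r \<ge> 0" using assms r_def by simp
  have "p1 (-x) (x-6) = (5855147 + r * (2942651 + r * (616136 + r * (68762 + r * (4312 + r * (144 + r * 2))))))"
    unfolding p1_def r_def by Groebner_Basis.algebra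
  also have "\<dots> > 0" using r by (intro add_pos_nonneg mult_nonneg_nonneg add_nonneg_nonneg; simp)
  finally show ?thesis .
qed

lemma c2: assumes "x \<ge> 13" shows "p1 ((15 - 8*x)/(2*x+1)) (x-6) < 0"
proof -
  define r where "r = x - 13"
  define D where "D = 2*x+1"
  define k where "k = (15 - 8*x)/(2*x+1)"
  have r: "r \<ge> 0" using assms r_def by simp
  have D: "D > 0" using assms D_def by simp
  have Dk: "D * k = 15 - 8*x" using D unfolding D_def k_def by simp
  have "D^6 * p1 k (x-6) = (D*k)^6 - (x-6)*(D*k)^5*D + (D*k)^5*D - 5*(x-6)*(D*k)^4*D^2 - 9*(D*k)^4*D^2
     - (x-6)*(D*k)^3*D^3 - 13*(D*k)^3*D^3 + 11*(x-6)*(D*k)^2*D^4 + 3*(D*k)^2*D^4 + (x-6)*(D*k)*D^5 + 7*(D*k)*D^5 - 2*(x-6)*D^6"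
    unfolding p1_def by Groebner_Basis.algebra
  also have "\<dots> = - (19942196165 + r * (13746321465 + r * (3959529406 + r * (622214536 + r * (58091464 + r * (3253536 + r * (102304 + r * 1408)))))))"
    unfolding Dk unfolding D_def r_def by Groebner_Basis.algebra
  also have "\<dots> < 0" using r by (simp only: neg_less_0_iff_less, intro add_pos_nonneg mult_nonneg_nonneg add_nonneg_nonneg; simp)
  finally have "D^6 * p1 k (x-6) < 0" .
  then show ?thesis using D unfolding k_def[symmetric] by (simp add: mult_less_0_iff)
qed

lemma c3: assumes "x \<ge> 13" "k \<le> (15 - 8*x)/(2*x+1)" shows "p2 k (x-5) < 0"
proof -
  define r where "r = x - 13"
  define D where "D = 2*x+1"
  define w where "w = 15 - 8*x - D*k"
  have r: "r \<ge> 0" using assms r_def by simp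
  have D: "D > 0" using assms D_def by simp
  have w: "w \<ge> 0" using assms(2) D unfolding w_def D_def by (simp add: pos_le_divide_eq mult.commute)
  have "D^5 * p2 k (x-5) = - ((146898188 + r * (108174339 + r * (31112224 + r * (4483868 + r * (341944 + r * (13040 + r * 192)))))) + w * ((217518170 + r * (95136687 + r * (16499920 + r * (1412912 + r * (59440 + r * 976))))) + w * ((8771264 + r * (2938761 + r * (362718 + r * (19412 + r * 376)))) + w * ((119521 + r * (27972 + r * (2084 + r * 48))) + w * ((634 + r * (81 + r * 2)) + w * 1)))))"
    unfolding p2_def w_def D_def r_def by Groebner_Basis.algebra
  also have "\<dots> < 0" using r w by (simp only: neg_less_0_iff_less, intro add_pos_nonneg mult_nonneg_nonneg add_nonneg_nonneg; simp)
  finally have "D^5 * p2 k (x-5) < 0" .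
  then show ?thesis using D by (simp add: mult_less_0_iff)
qed

lemma red2:
  fixes k m a b c t y :: real
  assumes e1: "k*a = c + 2*t" and e2: "k*b = m*y + 2*t" and e3: "k*y = b + (m-1)*y + c + 2*t"
    and e4: "k*c = a + m*y" and e5: "k*t = a + b + m*y"
  shows "p2 k m * a = 0" "p2 k m * b = 0" "p2 k m * y = 0" "p2 k m * c = 0" "p2 k m * t = 0"
  using assms unfolding p2_def by Groebner_Basis.algebra+

definition w0 :: "real \<Rightarrow> real \<Rightarrow> real" where
 "w0 k m = k^5 - m*k^4 + k^4 - 5*m*k^3 - 5*k^3 - 5*m*k^2 - 5*k^2 + 3*m*k + 2*k + 2*m + 2"
definition w1 :: "real \<Rightarrow> real \<Rightarrow> real" where
 "w1 k m = 3*k^3 + m*k^2 + 5*k^2 + 2*m*k - 2"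
definition wP :: "real \<Rightarrow> real" where
 "wP k = 4*k^3 + 7*k^2 - 3*k - 2"
definition wc :: "real \<Rightarrow> real \<Rightarrow> real" where
 "wc k m = k^4 - m*k^3 + k^3 - m*k^2 - 2*k^2 + 3*m*k + 2*m + 2"
definition wa :: "real \<Rightarrow> real \<Rightarrow> real" where
 "wa k m = k^4 - m*k^3 + 3*k^3 - 3*m*k^2 - k^2 - 2*m*k - 3*k"
definition wB :: "real \<Rightarrow> real \<Rightarrow> real" where
 "wB k m = k^4 - m*k^3 + 2*k^3 - 2*m*k^2 + k^2 - k - 1"

lemma eqs1_id:
  shows "k * w0 k m - (wc k m + wa k m + 2 * wB k m) = p1 k m"
    "k * w1 k m = m * wP k + wc k m + 2 * wB k m"
    "k * wP k = w1 k m + (m-1) * wP k + wc k m + wa k m + 2 * wB k m"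
    "k * wc k m = w0 k m + w1 k m + m * wP k"
    "k * wa k m = w0 k m + m * wP k + 2 * wB k m"
    "k * wB k m = w0 k m + w1 k m + m * wP k + wa k m"
  unfolding p1_def w0_def w1_def wP_def wc_def wa_def wB_def by Groebner_Basis.algebra+

lemma eqs1:
  assumes "p1 k m = 0"
  shows "k * w0 k m = wc k m + wa k m + 2 * wB k m"
    "k * w1 k m = m * wP k + wc k m + 2 * wB k m"
    "k * wP k = w1 k m + (m-1) * wP k + wc k m + wa k m + 2 * wB k m"
    "k * wc k m = w0 k m + w1 k m + m * wP k"
    "k * wa k m = w0 k m + m * wP k + 2 * wB k m"
    "k * wB k m = w0 k m + w1 k m + m * wP k + wa k m"
  using eqs1_id[of k m] assms by simp_all

lemma wP_neg: "k \<le> -3 \<Longrightarrow> wP k < 0"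
proof -
  assume "k \<le> -3"
  define u where "u = -3 - k"
  have u: "u \<ge> 0" "k = -3 - u" using \<open>k \<le> -3\<close> unfolding u_def by simp_all
  have "wP k = - (38 + u * (63 + u * (29 + u * 4)))" unfolding wP_def u(2) by Groebner_Basis.algebra
  also have "\<dots> < 0" using u by (simp only: neg_less_0_iff_less, intro add_pos_nonneg mult_nonneg_nonneg add_nonneg_nonneg; simp)
  finally show ?thesis .
qed


lemma s_le: "x \<ge> 13 \<Longrightarrow> (15 - 8*x)/(2*x+1) \<le> (-3::real)"
  by (simp add: divide_le_eq)
lemma s_gt: "x \<ge> 13 \<Longrightarrow> (15 - 8*x)/(2*x+1) > (-4::real)"
  by (simp add: less_divide_eq)

lemma eig_rows:
  assumes "eigenvalue (adj_mat n E) k"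
  obtains v where "v \<in> carrier_vec n" "v \<noteq> 0\<^sub>v n" "\<And>i. i < n \<Longrightarrow> (adj_mat n E *\<^sub>v v) $ i = k * v $ i"
proof -
  from assms obtain v where v: "v \<in> carrier_vec n" "v \<noteq> 0\<^sub>v n" "adj_mat n E *\<^sub>v v = k \<cdot>\<^sub>v v"
    unfolding eigenvalue_def eigenvector_def using adj_mat_carrier[of n E] by auto
  have "(adj_mat n E *\<^sub>v v) $ i = k * v $ i" if "i < n" for i
    using v that by simp
  then show ?thesis using that v by blast
qed

lemma eig_intro:
  assumes "v \<in> carrier_vec n" "v \<noteq> 0\<^sub>v n" "\<And>i. i < n \<Longrightarrow> (adj_mat n E *\<^sub>v v) $ i = k * v $ i"
  shows "eigenvalue (adj_mat n E) k"
proof -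
  have "adj_mat n E *\<^sub>v v = k \<cdot>\<^sub>v v"
    using assms adj_mat_carrier[of n E] by (intro eq_vecI) auto
  then show ?thesis unfolding eigenvalue_def eigenvector_def using assms adj_mat_carrier[of n E] by auto
qed

lemma U'_eig_gt:
  assumes p: "p \<ge> 9" and ev: "eigenvalue (adj_mat (p+4) (compl_graph (U'_graph p))) k"
  shows "k > (15 - 8*real(p+4))/(2*real(p+4)+1)"
proof (rule ccontr)
  define x where "x = real (p+4)"
  define A where "A = adj_mat (p+4) (compl_graph (U'_graph p))"
  assume "\<not> ?thesis"
  hence kle: "k \<le> (15 - 8*x)/(2*x+1)" by (simp add: x_def)
  have x13: "x \<ge> 13" using p x_def by simp
  have km3: "k \<le> -3" using kle s_le[OF x13] by linarith
  obtain v where v: "v \<in> carrier_vec (p+4)" "v \<noteq> 0\<^sub>v (p+4)" and row: "\<And>i. i < p+4 \<Longrightarrow> (A *\<^sub>v v) $ i = k * v $ i"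
    using eig_rows[OF ev] unfolding A_def by blast
  define S where "S = (\<Sum>j<p+4. v $ j)"
  note R = U'_rows[OF p v(1), folded A_def S_def]
  define y where "y = (S - v$0)/(k+1)"
  have k1: "k + 1 \<noteq> 0" using km3 by simp
  have vP: "v$i = y" if "2 \<le> i" "i \<le> p" for i
  proof -
    have "k * v$i = S - v$0 - v$i" using row[of i] R(3)[OF that] that by simp
    then have "(k+1) * v$i = S - v$0" by (simp add: algebra_simps)
    then show ?thesis unfolding y_def using k1 by (simp add: field_simps)
  qed
  define m where "m = real p - 1"
  have WP: "(\<Sum>j\<in>{2..p}. v$j) = m * y"
  proof -
    have "(\<Sum>j\<in>{2..p}. v$j) = (\<Sum>j\<in>{2..p}. y)" using vP by (intro sum.cong) auto
    also have "\<dots> = m * y" using p unfolding m_def by (simp add: of_nat_diff)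
    finally show ?thesis .
  qed
  have St: "S = v$0 + v$1 + m*y + v$(p+1) + v$(p+2) + v$(p+3)"
    unfolding S_def using sum_split_U'[OF p, of "\<lambda>j. v$j"] WP by simp
  have t: "v$(p+3) = v$(p+2)"
  proof -
    have h1: "k * v$(p+2) = S - v$(p+1) - v$(p+2) - v$(p+3)" using row[of "p+2"] R(5) by simp
    have h2: "k * v$(p+3) = S - v$(p+1) - v$(p+2) - v$(p+3)" using row[of "p+3"] R(6) by simp
    have "k * v$(p+3) = k * v$(p+2)" using h1 h2 by linarith
    moreover have "k \<noteq> 0" using km3 by simp
    ultimately show ?thesis by simp
  qed
  have v2: "v$2 = y" using vP[of 2] p by simp
  have e1: "k*v$0 = v$(p+1) + 2*v$(p+2)" using row[of 0] R(1) t by simp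
  have e2: "k*v$1 = m*y + 2*v$(p+2)" using row[of 1] R(2) t St by simp
  have e3: "k*y = v$1 + (m-1)*y + v$(p+1) + 2*v$(p+2)" using row[of 2] R(3)[of 2] t St v2 p
    by (simp add: algebra_simps)
  have e4: "k*v$(p+1) = v$0 + m*y" using row[of "p+1"] R(4) t St by simp
  have e5: "k*v$(p+2) = v$0 + v$1 + m*y" using row[of "p+2"] R(5) t St by simp
  note Z = red2[OF e1 e2 e3 e4 e5]
  have "p2 k (x-5) < 0" using c3[OF x13 kle] .
  moreover have "x - 5 = m" unfolding x_def m_def by simp
  ultimately have nz: "p2 k m \<noteq> 0" by simp
  have z: "v$0 = 0" "v$1 = 0" "y = 0" "v$(p+1) = 0" "v$(p+2) = 0"
    using Z nz by simp_all
  have "v = 0\<^sub>v (p+4)"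
  proof (intro eq_vecI)
    show "dim_vec v = dim_vec (0\<^sub>v (p+4))" using v by simp
    fix i assume "i < dim_vec (0\<^sub>v (p+4))"
    then have i: "i < p+4" by simp
    consider "i = 0" | "i = 1" | "2 \<le> i \<and> i \<le> p" | "i = p+1" | "i = p+2" | "i = p+3" using i by linarith
    then show "v $ i = 0\<^sub>v (p+4) $ i"
      using z vP t i by cases auto
  qed
  then show False using v(2) by simp
qed

lemma U'_eig0:
  assumes p: "p \<ge> 9"
  shows "eigenvalue (adj_mat (p+4) (compl_graph (U'_graph p))) 0"
proof -
  define v :: "real vec" where "v = vec (p+4) (\<lambda>i. if i = p+2 then 1 else if i = p+3 then -1 else 0)"
  have v: "v \<in> carrier_vec (p+4)" unfolding v_def by simp
  define S where "S = (\<Sum>j<p+4. v $ j)"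
  have S0: "S = 0"
  proof -
    have "(\<Sum>j\<in>{2..p}. v$j) = 0" unfolding v_def by (intro sum.neutral) auto
    then show ?thesis unfolding S_def using sum_split_U'[OF p, of "\<lambda>j. v$j"] unfolding v_def by simp
  qed
  note R = U'_rows[OF p v, folded S_def]
  show ?thesis
  proof (rule eig_intro[OF v])
    show "v \<noteq> 0\<^sub>v (p+4)"
    proof
      assume "v = 0\<^sub>v (p+4)"
      then have "v $ (p+2) = 0" by simp
      then show False unfolding v_def by simp
    qed
    fix i assume i: "i < p+4"
    consider "i = 0" | "i = 1" | "2 \<le> i \<and> i \<le> p" | "i = p+1" | "i = p+2" | "i = p+3" using i by linarith
    then show "(adj_mat (p+4) (compl_graph (U'_graph p)) *\<^sub>v v) $ i = 0 * v $ i"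
      using R S0 unfolding v_def by cases auto
  qed
qed

lemma U_eig_ex:
  assumes q: "q \<ge> 8"
  shows "\<exists>k. eigenvalue (adj_mat (q+5) (compl_graph (U_graph q 3))) k \<and> k \<le> (15 - 8*real(q+5))/(2*real(q+5)+1)"
proof -
  define x where "x = real (q+5)"
  define s where "s = (15 - 8*x)/(2*x+1)"
  have x13: "x \<ge> 13" using q x_def by simp
  have "-x \<le> s" using s_gt[OF x13] x13 unfolding s_def by linarith
  moreover have "p1 s (x-6) \<le> 0" using c2[OF x13] unfolding s_def by simp
  moreover have "0 \<le> p1 (-x) (x-6)" using c1[OF x13] by simp
  moreover have "continuous_on {-x..s} (\<lambda>k. p1 k (x-6))"
    unfolding p1_def by (intro continuous_intros)
  ultimately obtain k where k: "-x \<le> k" "k \<le> s" "p1 k (x-6) = 0"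
    using IVT2'[of "\<lambda>k. p1 k (x-6)" s 0 "-x"] by blast
  define m where "m = real q - 1"
  have xm: "x - 6 = m" unfolding x_def m_def by simp
  have pk: "p1 k m = 0" using k(3) xm by simp
  have km3: "k \<le> -3" using k(2) s_le[OF x13] unfolding s_def by linarith
  define v :: "real vec" where "v = vec (q+5) (\<lambda>i. if i = 0 then w0 k m else if i = 1 then w1 k m
     else if i \<le> q then wP k else if i = q+1 then wc k m else if i = q+2 then wa k m else wB k m)"
  have v: "v \<in> carrier_vec (q+5)" unfolding v_def by simp
  define S where "S = (\<Sum>j<q+5. v $ j)"
  have vv: "v$0 = w0 k m" "v$1 = w1 k m" "v$(q+1) = wc k m" "v$(q+2) = wa k m"
      "v$(q+3) = wB k m" "v$(q+4) = wB k m"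
    unfolding v_def using q by auto
  have vP: "v$i = wP k" if "2 \<le> i" "i \<le> q" for i
    unfolding v_def using q that by auto
  have WP: "(\<Sum>j\<in>{2..q}. v$j) = m * wP k"
  proof -
    have "(\<Sum>j\<in>{2..q}. v$j) = (\<Sum>j\<in>{2..q}. wP k)" using vP by (intro sum.cong) auto
    also have "\<dots> = m * wP k" using q unfolding m_def by (simp add: of_nat_diff)
    finally show ?thesis .
  qed
  have St: "S = w0 k m + w1 k m + m * wP k + wc k m + wa k m + 2 * wB k m"
    unfolding S_def using sum_split_U[OF q, of "\<lambda>j. v$j"] WP vv by simp
  note R = U_rows[OF q v, folded S_def]
  note E = eqs1[OF pk]
  have "eigenvalue (adj_mat (q+5) (compl_graph (U_graph q 3))) k"
  proof (rule eig_intro[OF v])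
    show "v \<noteq> 0\<^sub>v (q+5)"
    proof
      assume "v = 0\<^sub>v (q+5)"
      then have "v $ 2 = 0" using q by simp
      then show False using vP[of 2] q wP_neg[OF km3] by simp
    qed
    fix i assume i: "i < q+5"
    consider "i = 0" | "i = 1" | "2 \<le> i \<and> i \<le> q" | "i = q+1" | "i = q+2" | "i = q+3" | "i = q+4" using i by linarith
    then show "(adj_mat (q+5) (compl_graph (U_graph q 3)) *\<^sub>v v) $ i = k * v $ i"
    proof cases
      case 1 then show ?thesis using R(1) E(1) vv by simp
    next
      case 2 then show ?thesis using R(2) E(2) St vv by simp
    next
      case 3 then show ?thesis using R(3)[of i] E(3) St vP[of i] vv by (simp add: algebra_simps)
    next
      case 4 then show ?thesis using R(4) E(4) St vv by simp
    next
      case 5 then show ?thesis using R(5) E(5) St vv by simp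
    next
      case 6 then show ?thesis using R(6) E(6) St vv by simp
    next
      case 7 then show ?thesis using R(7) E(6) St vv by simp
    qed
  qed
  then show ?thesis using k(2) unfolding s_def x_def by blast
qed


theorem lemma2p1:
  fixes n :: nat
  assumes "n \<ge> 13"
  shows "lambda_min (adj_mat n (compl_graph (U_graph (n - 5) 3)))
       < lambda_min (adj_mat n (compl_graph (U'_graph (n - 4))))"
proof -
  define q where "q = n - 5"
  have nq: "n = q + 5" using assms unfolding q_def by simp
  have q8: "q \<ge> 8" using assms nq by simp
  have p9: "q + 1 \<ge> 9" using q8 by simp
  have e1: "n - 5 = q" "n - 4 = q + 1" using nq by auto
  have e2: "q + 1 + 4 = q + 5" by simp
  define s where "s = (15 - 8*real (q+5))/(2*real (q+5)+1)"
  obtain k1 where k1: "eigenvalue (adj_mat (q+5) (compl_graph (U_graph q 3))) k1" "k1 \<le> s"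
    using U_eig_ex[OF q8] unfolding s_def by blast
  have l1: "lambda_min (adj_mat (q+5) (compl_graph (U_graph q 3))) \<le> k1"
    unfolding lambda_min_def using k1(1) finite_eig by (intro Min_le) auto
  define A2 where "A2 = adj_mat (q+5) (compl_graph (U'_graph (q+1)))"
  have ne: "eigenvalue A2 0" unfolding A2_def using U'_eig0[OF p9] unfolding e2 .
  have "lambda_min A2 \<in> {k. eigenvalue A2 k}"
    unfolding lambda_min_def using finite_eig ne unfolding A2_def by (intro Min_in) auto
  then have ev2: "eigenvalue (adj_mat (q+1+4) (compl_graph (U'_graph (q+1)))) (lambda_min A2)"
    unfolding A2_def e2 by simp
  have l2: "lambda_min A2 > s" using U'_eig_gt[OF p9 ev2] unfolding s_def e2 .
  show ?thesis unfolding e1 unfolding nq using l1 l2 k1(2) unfolding A2_def by linarith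
qed

end
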